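(* For all $n\geq 1$, \[\bar{a}_2(n)=2\bar{p}(n)-\bar{p}(n+1)+\bar{u}(n+1),\] where $\bar{u}(N)$ is the number of overpartitions of $N$ such that: (1) $1$ is not a part; (2) the smallest part is overlined and no other part has the same value; (3) the values of the largest and second largest parts are either equal, or consecutive with the second largest part overlined.
   Context: An overpartition of $n$ is a partition of $n$ in which the first occurrence of each distinct part value may be overlined. $\bar{p}(n)$ is the number of overpartitions of $n$. $\bar{a}_m(n)$ is the number of overpartitions of $n$ in which the smallest part value occurs at least $m$ times, where an overlined part and a non-overlined part of the same value are counted as equal (e.g. $\bar{1}+1$ has smallest part $1$ occurring twice). *)

theory Defs
  imports Main "HOL-Library.Multiset"
begin

text \<open>An overpartition is represented as a pair (M, Ov): M is the multiset of part
  values (all positive), Ov is the set of values whose first occurrence is overlined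
  (so Ov must be a subset of the part values).\<close>

definition overpartitions :: "nat \<Rightarrow> (nat multiset \<times> nat set) set" where
  "overpartitions n = {(M, Ov). (\<forall>x\<in>#M. 0 < x) \<and> sum_mset M = n \<and> Ov \<subseteq> set_mset M}"

definition pbar :: "nat \<Rightarrow> nat" where
  "pbar n = card (overpartitions n)"

definition plain_count :: "nat multiset \<times> nat set \<Rightarrow> nat \<Rightarrow> nat" where
  "plain_count P v = count (fst P) v - (if v \<in> snd P then 1 else 0)"

definition abar :: "nat \<Rightarrow> nat \<Rightarrow> nat" where
  "abar m n = card {(M, Ov) \<in> overpartitions n.
      M \<noteq> {#} \<and> m \<le> count M (Min (set_mset M))}"

definition ubar_cond :: "nat multiset \<times> nat set \<Rightarrow> bool" where
  "ubar_cond P = (let M = fst P; Ov = snd P; s = Min (set_mset M); L = Max (set_mset M);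
                      R = M - {#L#} in
     plain_count P 1 = 0 \<and>
     M \<noteq> {#} \<and> s \<in> Ov \<and> count M s = 1 \<and>
     R \<noteq> {#} \<and>
     (Max (set_mset R) = L \<or> (Max (set_mset R) + 1 = L \<and> Max (set_mset R) \<in> Ov)))"

definition ubar :: "nat \<Rightarrow> nat" where
  "ubar N = card {P \<in> overpartitions N. ubar_cond P}"

end

theory Submission
  imports Defs
begin


lemma size_le_sum: "(\<forall>x\<in>#M. 0 < (x::nat)) \<Longrightarrow> size M \<le> sum_mset M"
  by (induction M) auto

lemma elem_le_sum: "(x::nat) \<in># M \<Longrightarrow> x \<le> sum_mset M"
proof -
  assume "x \<in># M"
  then obtain N where "M = add_mset x N" by (blast dest: multi_member_split)
  then show ?thesis by simp
qed

lemma finite_OP: "finite (overpartitions n)"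
proof -
  have "overpartitions n \<subseteq> (\<Union>k\<le>n. multisets_of_size {..n} k) \<times> Pow {..n}"
  proof
    fix P assume "P \<in> overpartitions n"
    then obtain M Ov where P: "P = (M, Ov)" "\<forall>x\<in>#M. 0 < x" "sum_mset M = n" "Ov \<subseteq> set_mset M"
      unfolding overpartitions_def by auto
    have "size M \<le> n" using P size_le_sum by metis
    moreover have "set_mset M \<subseteq> {..n}" using P elem_le_sum by auto
    ultimately show "P \<in> (\<Union>k\<le>n. multisets_of_size {..n} k) \<times> Pow {..n}"
      using P by (auto simp: multisets_of_size_def)
  qed
  moreover have "finite ((\<Union>k\<le>n. multisets_of_size {..n} k) \<times> Pow {..n})" by auto
  ultimately show ?thesis by (rule finite_subset)
qed

lemma card_plain1: "card {P \<in> overpartitions (Suc n). plain_count P 1 \<noteq> 0} = pbar n"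
proof -
  define f where "f = (\<lambda>(M::nat multiset, Ov::nat set). (add_mset 1 M, Ov))"
  define g where "g = (\<lambda>(M::nat multiset, Ov::nat set). (M - {#1#}, Ov))"
  have "bij_betw f (overpartitions n) {P \<in> overpartitions (Suc n). plain_count P 1 \<noteq> 0}"
  proof (rule bij_betw_byWitness[where f'=g])
    show "\<forall>a\<in>overpartitions n. g (f a) = a" by (auto simp: f_def g_def)
    show "\<forall>a\<in>{P \<in> overpartitions (Suc n). plain_count P 1 \<noteq> 0}. f (g a) = a"
    proof
      fix a assume a: "a \<in> {P \<in> overpartitions (Suc n). plain_count P 1 \<noteq> 0}"
      obtain M Ov where [simp]: "a = (M, Ov)" by fastforce
      have "count M 1 > 0" using a by (auto simp: plain_count_def split: if_splits simp del: count_greater_zero_iff)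
      hence "1 \<in># M" by simp
      then show "f (g a) = a" by (auto simp: f_def g_def)
    qed
    show "f ` overpartitions n \<subseteq> {P \<in> overpartitions (Suc n). plain_count P 1 \<noteq> 0}"
      by (auto simp: f_def overpartitions_def plain_count_def count_eq_zero_iff)
    show "g ` {P \<in> overpartitions (Suc n). plain_count P 1 \<noteq> 0} \<subseteq> overpartitions n"
    proof
      fix b assume "b \<in> g ` {P \<in> overpartitions (Suc n). plain_count P 1 \<noteq> 0}"
      then obtain M Ov where a: "(M, Ov) \<in> overpartitions (Suc n)" "plain_count (M, Ov) 1 \<noteq> 0"
        and b: "b = (M - {#1#}, Ov)" by (auto simp: g_def)
      have "count M 1 > 0" using a by (auto simp: plain_count_def split: if_splits simp del: count_greater_zero_iff)
      hence c1: "1 \<in># M" by simp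
      hence M: "M = add_mset 1 (M - {#1#})" by simp
      have "sum_mset (M - {#1#}) = n" 
      proof -
        have "sum_mset M = Suc n" using a(1) by (simp add: overpartitions_def)
        also have "sum_mset M = 1 + sum_mset (M - {#1#})" by (subst M) simp
        finally show ?thesis by simp
      qed
      moreover have "Ov \<subseteq> set_mset (M - {#1#})"
      proof
        fix v assume v: "v \<in> Ov"
        show "v \<in># M - {#1#}"
        proof (cases "v = 1")
          case True
          then have "count M 1 \<ge> 2" using a v by (auto simp: plain_count_def)
          then show ?thesis using True by (simp add: in_diff_count)
        next
          case False
          then show ?thesis using a v by (auto simp: overpartitions_def in_diff_count)
        qed
      qed
      moreover have "\<forall>x\<in>#M - {#1#}. 0 < x" using a(1) by (auto simp: overpartitions_def dest: in_diffD)
      ultimately show "b \<in> overpartitions n" using b by (auto simp: overpartitions_def)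
    qed
  qed
  then show ?thesis unfolding pbar_def by (simp add: bij_betw_same_card)
qed


lemma in_diff1: "(y::'a) \<in># M - {#b#} \<longleftrightarrow> (y \<in># M \<and> (y \<noteq> b \<or> 2 \<le> count M b))"
  by (auto simp: in_diff_count simp flip: count_greater_zero_iff)

lemma mn_le: "x \<in># M \<Longrightarrow> Min (set_mset M) \<le> (x::nat)" by simp
lemma mx_ge: "x \<in># M \<Longrightarrow> (x::nat) \<le> Max (set_mset M)" by simp
lemma mn_in: "M \<noteq> {#} \<Longrightarrow> Min (set_mset M) \<in># (M::nat multiset)" by simp
lemma mx_in: "M \<noteq> {#} \<Longrightarrow> Max (set_mset M) \<in># (M::nat multiset)" by simp
lemma mn_eq: "x \<in># M \<Longrightarrow> (\<And>y. y \<in># M \<Longrightarrow> x \<le> y) \<Longrightarrow> Min (set_mset M) = (x::nat)"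
  by (rule Min_eqI) auto
lemma mx_eq: "x \<in># M \<Longrightarrow> (\<And>y. y \<in># M \<Longrightarrow> y \<le> x) \<Longrightarrow> Max (set_mset M) = (x::nat)"
  by (rule Max_eqI) auto

lemma single_part:
  assumes "M \<noteq> {#}" "Min (set_mset M) = Max (set_mset M)" "count M (Min (set_mset M)) = 1"
  shows "M = {#Min (set_mset M)#}"
proof (rule multiset_eqI)
  fix x
  show "count M x = count {#Min (set_mset M)#} x"
  proof (cases "x = Min (set_mset M)")
    case True then show ?thesis using assms by simp
  next
    case False
    have "x \<notin># M"
    proof
      assume "x \<in># M"
      then have "Min (set_mset M) \<le> x" "x \<le> Max (set_mset M)" by simp_all
      then show False using False assms(2) by simp
    qed
    then show ?thesis using False by (simp add: not_in_iff)
  qed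
qed

definition top_cond :: "nat multiset \<times> nat set \<Rightarrow> bool" where
  "top_cond P = (let M = fst P; Ov = snd P; L = Max (set_mset M); R = M - {#L#} in
     R \<noteq> {#} \<and> (Max (set_mset R) = L \<or> (Max (set_mset R) + 1 = L \<and> Max (set_mset R) \<in> Ov)))"

lemma ubar_cond_alt: "ubar_cond (M, Ov) \<longleftrightarrow> plain_count (M, Ov) 1 = 0 \<and> M \<noteq> {#} \<and>
   Min (set_mset M) \<in> Ov \<and> count M (Min (set_mset M)) = 1 \<and> top_cond (M, Ov)"
  unfolding ubar_cond_def top_cond_def Let_def by auto

lemma top_iff:
  assumes "M \<noteq> {#}" "0 < Max (set_mset M)"
  shows "top_cond (M, Ov) \<longleftrightarrow> (2 \<le> count M (Max (set_mset M)) \<or>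
           (Max (set_mset M) - 1 \<in># M \<and> Max (set_mset M) - 1 \<in> Ov))"
proof -
  define L where "L = Max (set_mset M)"
  define R where "R = M - {#L#}"
  have LM: "L \<in># M" using assms L_def by simp
  have top: "top_cond (M, Ov) \<longleftrightarrow> R \<noteq> {#} \<and> (Max (set_mset R) = L \<or> (Max (set_mset R) + 1 = L \<and> Max (set_mset R) \<in> Ov))"
    unfolding top_cond_def L_def R_def Let_def by simp
  have Rle: "y \<le> L" if "y \<in># R" for y using that unfolding R_def L_def by (auto simp: in_diff1)
  show ?thesis
  proof (cases "2 \<le> count M L")
    case True
    then have "L \<in># R" unfolding R_def by (simp add: in_diff1 LM)
    then have "Max (set_mset R) = L" using Rle by (intro mx_eq)
    then show ?thesis using True top \<open>L \<in># R\<close> L_def by auto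
  next
    case False
    have LR: "y < L" if "y \<in># R" for y
      using that False Rle[OF that] unfolding R_def by (auto simp: in_diff1)
    show ?thesis
    proof
      assume "top_cond (M, Ov)"
      then have R: "R \<noteq> {#}" and c: "Max (set_mset R) = L \<or> (Max (set_mset R) + 1 = L \<and> Max (set_mset R) \<in> Ov)"
        using top by auto
      have "Max (set_mset R) \<in># R" using R by simp
      then have "Max (set_mset R) < L" using LR by blast
      then have "Max (set_mset R) + 1 = L \<and> Max (set_mset R) \<in> Ov" using c by auto
      moreover have "Max (set_mset R) \<in># M" using \<open>Max (set_mset R) \<in># R\<close> unfolding R_def
        by (auto simp: in_diff1)
      ultimately have "L - 1 \<in># M \<and> L - 1 \<in> Ov" by (metis add_diff_cancel_right')
      then show "2 \<le> count M (Max (set_mset M)) \<or> (Max (set_mset M) - 1 \<in># M \<and> Max (set_mset M) - 1 \<in> Ov)"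
        using L_def by auto
    next
      assume "2 \<le> count M (Max (set_mset M)) \<or> (Max (set_mset M) - 1 \<in># M \<and> Max (set_mset M) - 1 \<in> Ov)"
      then have h: "L - 1 \<in># M" "L - 1 \<in> Ov" using False L_def by auto
      have "L - 1 \<in># R" using h assms(2) unfolding R_def L_def by (auto simp: in_diff1)
      then have "Max (set_mset R) = L - 1"
        using LR by (intro mx_eq) force+
      then show "top_cond (M, Ov)" using top \<open>L - 1 \<in># R\<close> h assms(2) L_def by auto
    qed
  qed
qed



definition Bo :: "nat \<Rightarrow> (nat multiset \<times> nat set) set" where
  "Bo n = {(M, Ov) \<in> overpartitions n. M \<noteq> {#} \<and> count M (Min_mset M) = 1 \<and> Min_mset M \<in> Ov}"
definition Bp :: "nat \<Rightarrow> (nat multiset \<times> nat set) set" where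
  "Bp n = {(M, Ov) \<in> overpartitions n. M \<noteq> {#} \<and> count M (Min_mset M) = 1 \<and> Min_mset M \<notin> Ov}"

lemma OP_nonempty: "(M, Ov) \<in> overpartitions n \<Longrightarrow> 1 \<le> n \<Longrightarrow> M \<noteq> {#}"
  by (auto simp: overpartitions_def)

lemma pbar_split:
  assumes "1 \<le> n"
  shows "pbar n = abar 2 n + card (Bo n) + card (Bp n)"
proof -
  define A2 where "A2 = {(M, Ov) \<in> overpartitions n. M \<noteq> {#} \<and> 2 \<le> count M (Min_mset M)}"
  have eq: "overpartitions n = A2 \<union> Bo n \<union> Bp n"
  proof (intro equalityI subsetI)
    fix P assume P: "P \<in> overpartitions n"
    obtain M Ov where [simp]: "P = (M, Ov)" by fastforce
    have ne: "M \<noteq> {#}" using P assms OP_nonempty by simp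
    have "count M (Min_mset M) > 0" using Min_in_mset[OF ne] by simp
    then have "count M (Min_mset M) = 1 \<or> 2 \<le> count M (Min_mset M)" by linarith
    then show "P \<in> A2 \<union> Bo n \<union> Bp n" using P ne unfolding A2_def Bo_def Bp_def by auto
  qed (auto simp: A2_def Bo_def Bp_def)
  have fin: "finite A2" "finite (Bo n)" "finite (Bp n)"
    by (auto intro: finite_subset[OF _ finite_OP] simp: A2_def Bo_def Bp_def)
  have "card (overpartitions n) = card A2 + card (Bo n) + card (Bp n)"
  proof -
    have d1: "A2 \<inter> Bo n = {}" "(A2 \<union> Bo n) \<inter> Bp n = {}" by (auto simp: A2_def Bo_def Bp_def)
    have "card (A2 \<union> Bo n \<union> Bp n) = card (A2 \<union> Bo n) + card (Bp n)"
      using fin d1 by (intro card_Un_disjoint) auto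
    also have "card (A2 \<union> Bo n) = card A2 + card (Bo n)"
      using fin d1 by (intro card_Un_disjoint) auto
    finally show ?thesis using eq by simp
  qed
  then show ?thesis unfolding pbar_def abar_def A2_def by simp
qed



definition Aset :: "nat \<Rightarrow> (nat multiset \<times> nat set) set" where
  "Aset N = {(M, Ov) \<in> overpartitions N. 1 \<notin># M \<and> \<not> (count M (Min_mset M) = 1 \<and> Min_mset M \<in> Ov)}"
definition Dset :: "nat \<Rightarrow> (nat multiset \<times> nat set) set" where
  "Dset N = {(M, Ov) \<in> overpartitions N. plain_count (M, Ov) 1 = 0 \<and> count M (Min_mset M) = 1
      \<and> Min_mset M \<in> Ov \<and> \<not> top_cond (M, Ov)}"

lemma C_split:
  assumes "1 \<le> N"
  shows "card {P \<in> overpartitions N. plain_count P 1 = 0} = ubar N + card (Aset N) + card (Dset N)"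
proof -
  define U where "U = {P \<in> overpartitions N. ubar_cond P}"
  have eq: "{P \<in> overpartitions N. plain_count P 1 = 0} = U \<union> Aset N \<union> Dset N"
  proof (intro equalityI subsetI)
    fix P assume P: "P \<in> {P \<in> overpartitions N. plain_count P 1 = 0}"
    obtain M Ov where Pe[simp]: "P = (M, Ov)" by fastforce
    have OP: "(M, Ov) \<in> overpartitions N" and pc: "plain_count (M, Ov) 1 = 0" using P by auto
    have ne: "M \<noteq> {#}" using OP assms OP_nonempty by simp
    show "P \<in> U \<union> Aset N \<union> Dset N"
    proof (cases "count M (Min_mset M) = 1 \<and> Min_mset M \<in> Ov")
      case True
      then show ?thesis using OP pc ne unfolding U_def Dset_def by (auto simp: ubar_cond_alt)
    next
      case False
      have "1 \<notin># M"
      proof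
        assume one: "1 \<in># M"
        have "Min_mset M \<le> 1" using one by simp
        moreover have "Min_mset M > 0" using OP Min_in_mset[OF ne] by (auto simp: overpartitions_def)
        ultimately have mn: "Min_mset M = 1" by simp
        have "count M 1 > 0" using one by simp
        then have "count M 1 = 1 \<and> 1 \<in> Ov" using pc by (auto simp: plain_count_def simp del: count_greater_zero_iff split: if_splits)
        then show False using False mn by simp
      qed
      then show ?thesis using OP False unfolding Aset_def by auto
    qed
  next
    fix P assume "P \<in> U \<union> Aset N \<union> Dset N"
    then show "P \<in> {P \<in> overpartitions N. plain_count P 1 = 0}"
      unfolding U_def Aset_def Dset_def
      by (cases P) (auto simp: ubar_cond_alt plain_count_def not_in_iff)
  qed
  have fin: "finite U" "finite (Aset N)" "finite (Dset N)"
    by (auto intro: finite_subset[OF _ finite_OP] simp: U_def Aset_def Dset_def)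
  have d1: "U \<inter> Aset N = {}" "(U \<union> Aset N) \<inter> Dset N = {}"
    by (auto simp: U_def Aset_def Dset_def ubar_cond_alt)
  have "card (U \<union> Aset N \<union> Dset N) = card (U \<union> Aset N) + card (Dset N)"
    using fin d1 by (intro card_Un_disjoint) auto
  also have "card (U \<union> Aset N) = card U + card (Aset N)"
    using fin d1 by (intro card_Un_disjoint) auto
  finally show ?thesis using eq unfolding ubar_def U_def by simp
qed



lemma sum_swap: "(x::nat) \<in># M \<Longrightarrow> sum_mset (add_mset y (M - {#x#})) + x = sum_mset M + y"
proof -
  assume "x \<in># M"
  then obtain N where "M = add_mset x N" by (blast dest: multi_member_split)
  then show ?thesis by simp
qed

lemma OP_pos: "(M, Ov) \<in> overpartitions n \<Longrightarrow> x \<in># M \<Longrightarrow> 0 < x"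
  by (auto simp: overpartitions_def)

lemma inc_min:
  fixes M :: "nat multiset"
  assumes "M \<noteq> {#}" "count M (Min_mset M) = (1::nat)"
  shows "Min_mset (add_mset (Min_mset M + 1) (M - {#Min_mset M#})) = Min_mset M + 1"
proof (rule mn_eq)
  fix y assume "y \<in># add_mset (Min_mset M + 1) (M - {#Min_mset M#})"
  then have "y = Min_mset M + 1 \<or> (y \<in># M \<and> y \<noteq> Min_mset M)" using assms by (auto simp: in_diff1)
  then show "Min_mset M + 1 \<le> y"
  proof
    assume "y \<in># M \<and> y \<noteq> Min_mset M"
    then have "Min_mset M \<le> y" "y \<noteq> Min_mset M" by simp_all
    then show ?thesis by simp
  qed simp
qed simp

lemma dec_min:
  fixes M :: "nat multiset"
  assumes "M \<noteq> {#}" "0 < Min_mset M"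
  shows "Min_mset (add_mset (Min_mset M - 1) (M - {#Min_mset M#})) = Min_mset M - 1"
    and "count (add_mset (Min_mset M - 1) (M - {#Min_mset M#})) (Min_mset M - 1) = 1"
    and "Min_mset M - 1 \<notin># M"
proof -
  show nin: "Min_mset M - 1 \<notin># M"
  proof
    assume "Min_mset M - 1 \<in># M"
    then have "Min_mset M \<le> Min_mset M - 1" by simp
    then show False using assms(2) by linarith
  qed
  show "Min_mset (add_mset (Min_mset M - 1) (M - {#Min_mset M#})) = Min_mset M - 1"
  proof (rule mn_eq)
    fix y assume "y \<in># add_mset (Min_mset M - 1) (M - {#Min_mset M#})"
    then have "y = Min_mset M - 1 \<or> y \<in># M" by (auto simp: in_diff1)
    then show "Min_mset M - 1 \<le> y"
    proof
      assume "y \<in># M" then have "Min_mset M \<le> y" by simp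
      then show ?thesis by simp
    qed simp
  qed simp
  have "count (M - {#Min_mset M#}) (Min_mset M - 1) = 0"
    using nin by (simp add: not_in_iff)
  then show "count (add_mset (Min_mset M - 1) (M - {#Min_mset M#})) (Min_mset M - 1) = 1" by simp
qed

lemma card_A:
  shows "card (Aset (Suc n)) = card (Bp n)"
proof -
  define h where "h = (\<lambda>(M::nat multiset, Ov::nat set). (add_mset (Min_mset M + 1) (M - {#Min_mset M#}), Ov))"
  define k where "k = (\<lambda>(M::nat multiset, Ov::nat set). (add_mset (Min_mset M - 1) (M - {#Min_mset M#}), Ov))"
  have "bij_betw h (Bp n) (Aset (Suc n))"
  proof (rule bij_betw_byWitness[where f'=k])
    show "\<forall>a\<in>Bp n. k (h a) = a"
    proof
      fix a assume a: "a \<in> Bp n"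
      obtain M Ov where ae[simp]: "a = (M, Ov)" by fastforce
      have ne: "M \<noteq> {#}" and c: "count M (Min_mset M) = 1" using a by (auto simp: Bp_def)
      have "Min_mset M \<in># M" using ne by simp
      then show "k (h a) = a" using inc_min[OF ne c] by (simp add: h_def k_def)
    qed
    show "\<forall>a\<in>Aset (Suc n). h (k a) = a"
    proof
      fix a assume a: "a \<in> Aset (Suc n)"
      obtain M Ov where ae[simp]: "a = (M, Ov)" by fastforce
      have OP: "(M, Ov) \<in> overpartitions (Suc n)" using a by (auto simp: Aset_def)
      have ne: "M \<noteq> {#}" using OP OP_nonempty by simp
      have mi: "Min_mset M \<in># M" using ne by simp
      have pos: "0 < Min_mset M" using OP_pos[OF OP mi] .
      show "h (k a) = a" using dec_min(1)[OF ne pos] pos mi by (simp add: h_def k_def)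
    qed
    show "h ` Bp n \<subseteq> Aset (Suc n)"
    proof
      fix b assume "b \<in> h ` Bp n"
      then obtain M Ov where a: "(M, Ov) \<in> Bp n" and b: "b = h (M, Ov)" by auto
      define s where "s = Min_mset M"
      have OP: "(M, Ov) \<in> overpartitions n" and ne: "M \<noteq> {#}" and c: "count M s = 1" and ns: "s \<notin> Ov"
        using a by (auto simp: Bp_def s_def)
      have mi: "s \<in># M" using ne s_def by simp
      have pos: "0 < s" using OP_pos[OF OP mi] .
      define M' where "M' = add_mset (s + 1) (M - {#s#})"
      have b': "b = (M', Ov)" using b by (simp add: h_def M'_def s_def)
      have mn': "Min_mset M' = s + 1" using inc_min[OF ne] c unfolding M'_def s_def by simp
      have memM': "y \<in># M' \<longleftrightarrow> y = s + 1 \<or> (y \<in># M \<and> y \<noteq> s)" for y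
        using c by (auto simp: M'_def in_diff1)
      have "\<forall>x\<in>#M'. 0 < x" using OP memM' by (auto simp: overpartitions_def)
      moreover have "sum_mset M' = Suc n" using sum_swap[OF mi, of "s+1"] OP
        by (simp add: M'_def overpartitions_def)
      moreover have "Ov \<subseteq> set_mset M'" using OP ns memM' by (auto simp: overpartitions_def)
      moreover have "1 \<notin># M'"
      proof
        assume "1 \<in># M'"
        then have "1 = s + 1 \<or> (1 \<in># M \<and> 1 \<noteq> s)" using memM' by blast
        moreover have "1 \<in># M \<Longrightarrow> s \<le> 1" using s_def by simp
        ultimately show False using pos by auto
      qed
      moreover have "\<not> (count M' (s + 1) = 1 \<and> s + 1 \<in> Ov)"
      proof
        assume h1: "count M' (s + 1) = 1 \<and> s + 1 \<in> Ov"
        have "count M' (s + 1) = count M (s + 1) + 1" by (simp add: M'_def)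
        then have "count M (s + 1) = 0" using h1 by simp
        then have "s + 1 \<notin># M" by (simp add: not_in_iff)
        then show False using h1 OP by (auto simp: overpartitions_def)
      qed
      ultimately show "b \<in> Aset (Suc n)" using b' mn' unfolding Aset_def overpartitions_def by auto
    qed
    show "k ` Aset (Suc n) \<subseteq> Bp n"
    proof
      fix b assume "b \<in> k ` Aset (Suc n)"
      then obtain M Ov where a: "(M, Ov) \<in> Aset (Suc n)" and b: "b = k (M, Ov)" by auto
      define t where "t = Min_mset M"
      have OP: "(M, Ov) \<in> overpartitions (Suc n)" and n1: "1 \<notin># M"
        and c: "\<not> (count M t = 1 \<and> t \<in> Ov)"
        using a by (auto simp: Aset_def t_def)
      have ne: "M \<noteq> {#}" using OP OP_nonempty by simp
      have mi: "t \<in># M" using ne t_def by simp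
      have pos: "0 < t" using OP_pos[OF OP mi] .
      have t2: "2 \<le> t" using pos mi n1 by (cases "t = 1") auto
      define M' where "M' = add_mset (t - 1) (M - {#t#})"
      have b': "b = (M', Ov)" using b by (simp add: k_def M'_def t_def)
      have mn': "Min_mset M' = t - 1" and cnt: "count M' (t - 1) = 1" and nin: "t - 1 \<notin># M"
        using dec_min[OF ne] pos unfolding M'_def t_def by auto
      have memM': "y \<in># M' \<longleftrightarrow> y = t - 1 \<or> (y \<in># M \<and> (y \<noteq> t \<or> 2 \<le> count M t))" for y
        by (auto simp: M'_def in_diff1)
      have "\<forall>x\<in>#M'. 0 < x" using OP memM' t2 by (auto simp: overpartitions_def)
      moreover have "sum_mset M' = n" using sum_swap[OF mi, of "t-1"] OP t2
        by (simp add: M'_def overpartitions_def)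
      moreover have "Ov \<subseteq> set_mset M'"
      proof
        fix v assume v: "v \<in> Ov"
        then have vM: "v \<in># M" using OP by (auto simp: overpartitions_def)
        show "v \<in># M'"
        proof (cases "v = t")
          case True
          have "count M t > 0" using mi by simp
          then have "2 \<le> count M t" using c v True by (simp del: count_greater_zero_iff)
          then show ?thesis using memM' vM by blast
        next
          case False then show ?thesis using memM' vM by blast
        qed
      qed
      moreover have "t - 1 \<notin> Ov" using nin OP by (auto simp: overpartitions_def)
      moreover have "M' \<noteq> {#}" by (simp add: M'_def)
      ultimately show "b \<in> Bp n" using b' mn' cnt unfolding Bp_def overpartitions_def by auto
    qed
  qed
  then show ?thesis by (simp add: bij_betw_same_card)
qed



lemma inc_max:
  fixes M :: "nat multiset"
  assumes "M \<noteq> {#}"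
  shows "Max_mset (add_mset (Max_mset M + 1) (M - {#Max_mset M#})) = Max_mset M + 1"
    and "count (add_mset (Max_mset M + 1) (M - {#Max_mset M#})) (Max_mset M + 1) = 1"
    and "Max_mset M + 1 \<notin># M"
proof -
  show nin: "Max_mset M + 1 \<notin># M"
  proof
    assume "Max_mset M + 1 \<in># M"
    then have "Max_mset M + 1 \<le> Max_mset M" by simp
    then show False by linarith
  qed
  show "Max_mset (add_mset (Max_mset M + 1) (M - {#Max_mset M#})) = Max_mset M + 1"
  proof (rule mx_eq)
    fix y assume "y \<in># add_mset (Max_mset M + 1) (M - {#Max_mset M#})"
    then have "y = Max_mset M + 1 \<or> y \<in># M" by (auto simp: in_diff1)
    then show "y \<le> Max_mset M + 1"
    proof
      assume "y \<in># M" then have "y \<le> Max_mset M" by simp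
      then show ?thesis by simp
    qed simp
  qed simp
  have "count (M - {#Max_mset M#}) (Max_mset M + 1) = 0"
    using nin by (simp add: not_in_iff)
  then show "count (add_mset (Max_mset M + 1) (M - {#Max_mset M#})) (Max_mset M + 1) = 1" by simp
qed

lemma dec_max:
  fixes M :: "nat multiset"
  assumes "M \<noteq> {#}" "count M (Max_mset M) = 1" "0 < Max_mset M"
  shows "Max_mset (add_mset (Max_mset M - 1) (M - {#Max_mset M#})) = Max_mset M - 1"
proof (rule mx_eq)
  fix y assume "y \<in># add_mset (Max_mset M - 1) (M - {#Max_mset M#})"
  then have "y = Max_mset M - 1 \<or> (y \<in># M \<and> y \<noteq> Max_mset M)" using assms by (auto simp: in_diff1)
  then show "y \<le> Max_mset M - 1"
  proof
    assume "y \<in># M \<and> y \<noteq> Max_mset M"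
    then have "y \<le> Max_mset M" "y \<noteq> Max_mset M" by simp_all
    then show ?thesis by simp
  qed simp
qed simp

lemma plain_zero:
  fixes M :: "nat multiset"
  assumes "M \<noteq> {#}" "\<forall>x\<in>#M. 0 < x" "count M (Min_mset M) = 1" "Min_mset M \<in> Ov"
  shows "plain_count (M, Ov) 1 = 0"
proof (cases "1 \<in># M")
  case True
  then have "Min_mset M \<le> 1" by simp
  moreover have "0 < Min_mset M" using assms by simp
  ultimately have "Min_mset M = 1" by simp
  then show ?thesis using assms by (simp add: plain_count_def)
next
  case False
  then show ?thesis by (simp add: plain_count_def not_in_iff)
qed

lemma D_props:
  assumes D: "(M, Ov) \<in> Dset (Suc n)" and n: "1 \<le> n"
  shows "M \<noteq> {#}" "count M (Max_mset M) = 1" "2 \<le> Max_mset M" "Max_mset M - 1 \<notin> Ov"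
    "Max_mset M = Min_mset M \<Longrightarrow> M = {#Min_mset M#}"
    "Max_mset M \<noteq> Min_mset M \<Longrightarrow> Min_mset M < Max_mset M - 1"
proof -
  have OP: "(M, Ov) \<in> overpartitions (Suc n)" and c: "count M (Min_mset M) = 1"
    and so: "Min_mset M \<in> Ov" and nt: "\<not> top_cond (M, Ov)" using D by (auto simp: Dset_def)
  show ne: "M \<noteq> {#}" using OP OP_nonempty by simp
  have Lin: "Max_mset M \<in># M" using ne by simp
  have Lpos: "0 < Max_mset M" using OP_pos[OF OP Lin] .
  have nt2: "\<not> 2 \<le> count M (Max_mset M)" "\<not> (Max_mset M - 1 \<in># M \<and> Max_mset M - 1 \<in> Ov)"
    using nt top_iff[OF ne Lpos, of Ov] by auto
  have "0 < count M (Max_mset M)" using Lin by simp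
  then show c1: "count M (Max_mset M) = 1" using nt2(1) by (simp del: count_greater_zero_iff)
  have OvM: "Ov \<subseteq> set_mset M" using OP by (simp add: overpartitions_def)
  show nOv: "Max_mset M - 1 \<notin> Ov" using nt2(2) OvM by auto
  have sle: "Min_mset M \<le> Max_mset M" using Lin by simp
  have sM: "Min_mset M \<in># M" using ne by simp
  show single: "M = {#Min_mset M#}" if "Max_mset M = Min_mset M"
    using single_part[OF ne] that c by simp
  show lt: "Min_mset M < Max_mset M - 1" if "Max_mset M \<noteq> Min_mset M"
  proof -
    have "Min_mset M \<noteq> Max_mset M - 1" using nt2(2) sM so by auto
    then show ?thesis using that sle by linarith
  qed
  show "2 \<le> Max_mset M"
  proof (cases "Max_mset M = Min_mset M")
    case True
    then have "M = {#Min_mset M#}" using single by simp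
    then have "sum_mset M = sum_mset {#Min_mset M#}" by (rule arg_cong)
    then have "sum_mset M = Min_mset M" by simp
    then have "Min_mset M = Suc n" using OP by (simp add: overpartitions_def)
    then show ?thesis using True n by simp
  next
    case False
    then show ?thesis using lt Min_in_mset[OF ne] OP_pos[OF OP sM] by linarith
  qed
qed



lemma card_D:
  assumes n: "1 \<le> n"
  shows "card (Dset (Suc n)) = card (Bo n)"
proof -
  define f where "f = (\<lambda>(M::nat multiset, Ov::nat set).
     (add_mset (Max_mset M - 1) (M - {#Max_mset M#}),
      (Ov - {Max_mset M}) \<union> (if Max_mset M \<in> Ov then {Max_mset M - 1} else {})))"
  define g where "g = (\<lambda>(M::nat multiset, Ov::nat set).
     (add_mset (Max_mset M + 1) (M - {#Max_mset M#}),
      (Ov - {Max_mset M}) \<union> (if Max_mset M \<in> Ov then {Max_mset M + 1} else {})))"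
  have "bij_betw f (Dset (Suc n)) (Bo n)"
  proof (rule bij_betw_byWitness[where f'=g])
    show "\<forall>a\<in>Dset (Suc n). g (f a) = a"
    proof
      fix a assume a: "a \<in> Dset (Suc n)"
      obtain M Ov where ae[simp]: "a = (M, Ov)" by fastforce
      note DP = D_props[OF a[unfolded ae] n]
      define L where "L = Max_mset M"
      define M' where "M' = add_mset (L - 1) (M - {#L#})"
      define Ov' where "Ov' = (Ov - {L}) \<union> (if L \<in> Ov then {L - 1} else {})"
      have mx: "Max_mset M' = L - 1"
        using dec_max[OF DP(1,2)] DP(3) unfolding L_def M'_def by simp
      have fe: "f a = (M', Ov')" by (simp add: f_def M'_def Ov'_def L_def)
      have ge: "g (M', Ov') = (add_mset (L - 1 + 1) (M' - {#L - 1#}),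
          (Ov' - {L - 1}) \<union> (if L - 1 \<in> Ov' then {L - 1 + 1} else {}))"
        by (simp only: g_def prod.case mx)
      have LM: "L \<in># M" using DP(1) L_def by simp
      have L2: "2 \<le> L" and nOv: "L - 1 \<notin> Ov" using DP L_def by auto
      have "add_mset (L - 1 + 1) (M' - {#L - 1#}) = M"
        using L2 LM by (simp add: M'_def)
      moreover have "(Ov' - {L - 1}) \<union> (if L - 1 \<in> Ov' then {L - 1 + 1} else {}) = Ov"
        using L2 nOv by (auto simp: Ov'_def)
      ultimately show "g (f a) = a" using fe ge by simp
    qed
    show "\<forall>a\<in>Bo n. f (g a) = a"
    proof
      fix a assume a: "a \<in> Bo n"
      obtain M Ov where ae[simp]: "a = (M, Ov)" by fastforce
      have OP: "(M, Ov) \<in> overpartitions n" using a by (auto simp: Bo_def)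
      have ne: "M \<noteq> {#}" using OP n OP_nonempty by simp
      define L where "L = Max_mset M"
      define M' where "M' = add_mset (L + 1) (M - {#L#})"
      define Ov' where "Ov' = (Ov - {L}) \<union> (if L \<in> Ov then {L + 1} else {})"
      have mx: "Max_mset M' = L + 1" and nin: "L + 1 \<notin># M"
        using inc_max[OF ne] unfolding L_def M'_def by auto
      have ge: "g a = (M', Ov')" by (simp add: g_def M'_def Ov'_def L_def)
      have fe: "f (M', Ov') = (add_mset (L + 1 - 1) (M' - {#L + 1#}),
          (Ov' - {L + 1}) \<union> (if L + 1 \<in> Ov' then {L + 1 - 1} else {}))"
        by (simp only: f_def prod.case mx)
      have LM: "L \<in># M" using ne L_def by simp
      have nOv: "L + 1 \<notin> Ov" using nin OP by (auto simp: overpartitions_def)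
      have "add_mset (L + 1 - 1) (M' - {#L + 1#}) = M"
        using LM by (simp add: M'_def)
      moreover have "(Ov' - {L + 1}) \<union> (if L + 1 \<in> Ov' then {L + 1 - 1} else {}) = Ov"
        using nOv by (auto simp: Ov'_def)
      ultimately show "f (g a) = a" using fe ge by simp
    qed
    show "f ` Dset (Suc n) \<subseteq> Bo n"
    proof
      fix b assume "b \<in> f ` Dset (Suc n)"
      then obtain M Ov where a: "(M, Ov) \<in> Dset (Suc n)" and b: "b = f (M, Ov)" by auto
      note DP = D_props[OF a n]
      have OP: "(M, Ov) \<in> overpartitions (Suc n)" and c: "count M (Min_mset M) = 1"
        and so: "Min_mset M \<in> Ov" using a by (auto simp: Dset_def)
      define L where "L = Max_mset M"
      define s where "s = Min_mset M"
      define M' where "M' = add_mset (L - 1) (M - {#L#})"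
      define Ov' where "Ov' = (Ov - {L}) \<union> (if L \<in> Ov then {L - 1} else {})"
      have b': "b = (M', Ov')" using b by (simp add: f_def M'_def Ov'_def L_def)
      have LM: "L \<in># M" using DP(1) L_def by simp
      have sM: "s \<in># M" using DP(1) s_def by simp
      have L2: "2 \<le> L" using DP L_def by auto
      have cL: "count M L = 1" using DP L_def by auto
      have memM': "y \<in># M' \<longleftrightarrow> y = L - 1 \<or> (y \<in># M \<and> y \<noteq> L)" for y
        using cL by (auto simp: M'_def in_diff1)
      have "\<forall>x\<in>#M'. 0 < x" using OP memM' L2 by (auto simp: overpartitions_def)
      moreover have "sum_mset M' = n" using sum_swap[OF LM, of "L - 1"] OP L2
        by (simp add: M'_def overpartitions_def)
      moreover have "Ov' \<subseteq> set_mset M'" using OP memM' by (auto simp: overpartitions_def Ov'_def)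
      moreover have "M' \<noteq> {#}" by (simp add: M'_def)
      moreover have "count M' (Min_mset M') = 1 \<and> Min_mset M' \<in> Ov'"
      proof (cases "L = s")
        case True
        then have Ms: "M = {#s#}" using DP(5) L_def s_def by simp
        have "M' = {#s - 1#}" using True Ms by (simp add: M'_def)
        moreover have "s - 1 \<in> Ov'" using True so s_def by (simp add: Ov'_def)
        ultimately show ?thesis by simp
      next
        case False
        then have lt: "s < L - 1" using DP(6) L_def s_def by simp
        have "Min_mset M' = s"
        proof (rule mn_eq)
          show "s \<in># M'" using memM' sM lt by simp
          fix y assume "y \<in># M'"
          then have "y = L - 1 \<or> y \<in># M" using memM' by blast
          then show "s \<le> y" using lt s_def by auto
        qed
        moreover have "count M' s = 1" using c lt s_def by (simp add: M'_def)
        moreover have "s \<in> Ov'" using so lt s_def by (auto simp: Ov'_def)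
        ultimately show ?thesis by simp
      qed
      ultimately show "b \<in> Bo n" using b' unfolding Bo_def overpartitions_def by auto
    qed
    show "g ` Bo n \<subseteq> Dset (Suc n)"
    proof
      fix b assume "b \<in> g ` Bo n"
      then obtain M Ov where a: "(M, Ov) \<in> Bo n" and b: "b = g (M, Ov)" by auto
      have OP: "(M, Ov) \<in> overpartitions n" and c: "count M (Min_mset M) = 1"
        and so: "Min_mset M \<in> Ov" using a by (auto simp: Bo_def)
      have ne: "M \<noteq> {#}" using OP n OP_nonempty by simp
      define L where "L = Max_mset M"
      define s where "s = Min_mset M"
      define M' where "M' = add_mset (L + 1) (M - {#L#})"
      define Ov' where "Ov' = (Ov - {L}) \<union> (if L \<in> Ov then {L + 1} else {})"
      have b': "b = (M', Ov')" using b by (simp add: g_def M'_def Ov'_def L_def)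
      have LM: "L \<in># M" using ne L_def by simp
      have sM: "s \<in># M" using ne s_def by simp
      have sL: "s \<le> L" using sM L_def by simp
      have mx: "Max_mset M' = L + 1" and cnt: "count M' (L + 1) = 1"
        using inc_max[OF ne] unfolding L_def M'_def by auto
      have memM': "y \<in># M' \<longleftrightarrow> y = L + 1 \<or> (y \<in># M \<and> (y \<noteq> L \<or> 2 \<le> count M L))" for y
        by (auto simp: M'_def in_diff1)
      have pos: "\<forall>x\<in>#M'. 0 < x" using OP memM' by (auto simp: overpartitions_def)
      moreover have "sum_mset M' = Suc n" using sum_swap[OF LM, of "L + 1"] OP
        by (simp add: M'_def overpartitions_def)
      moreover have "Ov' \<subseteq> set_mset M'" using OP memM' by (auto simp: overpartitions_def Ov'_def)
      moreover have ne': "M' \<noteq> {#}" by (simp add: M'_def)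
      moreover have mn': "count M' (Min_mset M') = 1 \<and> Min_mset M' \<in> Ov'"
      proof (cases "L = s")
        case True
        then have Ms: "M = {#s#}" using single_part[OF ne] c L_def s_def by simp
        have "M' = {#s + 1#}" using True Ms by (simp add: M'_def)
        moreover have "s + 1 \<in> Ov'" using True so s_def by (simp add: Ov'_def)
        ultimately show ?thesis by simp
      next
        case False
        then have lt: "s < L" using sL by simp
        have "Min_mset M' = s"
        proof (rule mn_eq)
          show "s \<in># M'" using memM' sM lt by simp
          fix y assume "y \<in># M'"
          then have "y = L + 1 \<or> y \<in># M" using memM' by blast
          then show "s \<le> y" using lt s_def by auto
        qed
        moreover have "count M' s = 1" using c lt s_def by (simp add: M'_def)
        moreover have "s \<in> Ov'" using so lt s_def by (auto simp: Ov'_def)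
        ultimately show ?thesis by simp
      qed
      moreover have "plain_count (M', Ov') 1 = 0" using plain_zero[OF ne' pos] mn' by simp
      moreover have "\<not> top_cond (M', Ov')"
      proof -
        have "0 < Max_mset M'" using mx by simp
        then have "top_cond (M', Ov') \<longleftrightarrow> (2 \<le> count M' (Max_mset M') \<or>
           (Max_mset M' - 1 \<in># M' \<and> Max_mset M' - 1 \<in> Ov'))" using top_iff[OF ne'] by blast
        moreover have "L \<notin> Ov'" by (simp add: Ov'_def)
        ultimately show ?thesis using mx cnt by simp
      qed
      ultimately show "b \<in> Dset (Suc n)" using b' unfolding Dset_def overpartitions_def by auto
    qed
  qed
  then show ?thesis by (simp add: bij_betw_same_card)
qed


theorem theorem5p1:
  fixes n :: nat
  assumes "1 \<le> n"
  shows "int (abar 2 n) = 2 * int (pbar n) - int (pbar (n + 1)) + int (ubar (n + 1))"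
proof -
  define C where "C = {P \<in> overpartitions (Suc n). plain_count P 1 = 0}"
  define E where "E = {P \<in> overpartitions (Suc n). plain_count P 1 \<noteq> 0}"
  have eq: "overpartitions (Suc n) = C \<union> E" by (auto simp: C_def E_def)
  have fin: "finite C" "finite E" by (auto intro: finite_subset[OF _ finite_OP] simp: C_def E_def)
  have "card (C \<union> E) = card C + card E"
    using fin by (intro card_Un_disjoint) (auto simp: C_def E_def)
  then have p1: "pbar (Suc n) = card C + pbar n"
    using eq card_plain1[of n] unfolding pbar_def E_def by simp
  have c: "card C = ubar (Suc n) + card (Bp n) + card (Bo n)"
    using C_split[of "Suc n"] card_A[of n] card_D[OF assms] unfolding C_def by simp
  have p0: "pbar n = abar 2 n + card (Bo n) + card (Bp n)" using pbar_split[OF assms] .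
  show ?thesis using p1 c p0 by simp
qed

end
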